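(* Let $A\in\mathbb{R}^{m\times N}$ and $K\subset[N]$. The following are equivalent: (i) $\mathbb{1}_K$ and $\mathbb{1}-\mathbb{1}_K=\mathbb{1}_{K^c}$ are the unique solutions of $\min\|x\|_1$ subject to $Ax=b$, $x\in[0,1]^N$, with $b=A\mathbb{1}_K$ and $b=A\mathbb{1}_{K^c}$, respectively; (ii) $\ker(A)\cap H_K=\{0\}$; (iii) $\{x\in[0,1]^N: Ax=A\mathbb{1}_K\}=\{\mathbb{1}_K\}$; (iv) $\{x\in[0,1]^N: Ax=A\mathbb{1}_{K^c}\}=\{\mathbb{1}_{K^c}\}$.
   Context: $[N]=\{1,\dots,N\}$, $K^c=[N]\setminus K$, $\mathbb{1}\in\mathbb{R}^N$ is the all-ones vector and $\mathbb{1}_K$ the indicator vector of $K$. $H_K=\{w\in\mathbb{R}^N: w_i\le 0 \text{ for } i\in K,\ w_i\ge 0 \text{ for } i\notin K\}$. *)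

theory Defs
  imports "HOL-Analysis.Analysis"
begin

text \<open>Index set [N] is the finite type 'n (N = CARD('n)); vectors in R^N are real^'n,
  matrices in R^(m x N) are real^'n^'m.\<close>

definition ones :: "real^'n" where
  "ones = (\<chi> i. 1)"

definition indic_vec :: "'n set \<Rightarrow> real^'n" where
  "indic_vec K = (\<chi> i. if i \<in> K then 1 else 0)"

definition l1norm :: "real^'n \<Rightarrow> real" where
  "l1norm x = (\<Sum>i\<in>UNIV. \<bar>x $ i\<bar>)"

definition unit_cube :: "(real^'n) set" where
  "unit_cube = {x. \<forall>i. 0 \<le> x $ i \<and> x $ i \<le> 1}"

definition H_set :: "'n set \<Rightarrow> (real^'n) set" where
  "H_set K = {w. (\<forall>i\<in>K. w $ i \<le> 0) \<and> (\<forall>i. i \<notin> K \<longrightarrow> w $ i \<ge> 0)}"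

definition matrix_kernel :: "real^'n^'m \<Rightarrow> (real^'n) set" where
  "matrix_kernel A = {x. A *v x = 0}"

definition unique_l1_box_solution :: "real^'n^'m \<Rightarrow> real^'m \<Rightarrow> real^'n \<Rightarrow> bool" where
  "unique_l1_box_solution A b z \<longleftrightarrow>
     z \<in> unit_cube \<and> A *v z = b \<and>
     (\<forall>x. x \<in> unit_cube \<and> A *v x = b \<and> x \<noteq> z \<longrightarrow> l1norm z < l1norm x)"

end

theory Submission
  imports Defs
begin

lemma scale_box:
  fixes A :: "real^'n^'m"
  assumes "w \<in> matrix_kernel A \<inter> H_set K" "w \<noteq> 0"
  obtains v where "v \<in> matrix_kernel A \<inter> H_set K" "v \<noteq> 0" "\<forall>i. \<bar>v$i\<bar> \<le> 1"
proof -
  define c where "c = 1 / (1 + l1norm w)"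
  have l0: "l1norm w \<ge> 0" unfolding l1norm_def by (simp add: sum_nonneg)
  have cpos: "c > 0" using l0 unfolding c_def by simp
  have comp: "\<bar>w$i\<bar> \<le> l1norm w" for i
    unfolding l1norm_def by (rule member_le_sum) auto
  have "\<bar>(c *\<^sub>R w)$i\<bar> \<le> 1" for i
  proof -
    have "\<bar>(c *\<^sub>R w)$i\<bar> = \<bar>w$i\<bar> / (1 + l1norm w)" using cpos
      by (simp add: c_def abs_mult)
    also have "\<dots> \<le> 1" using comp[of i] l0 by (simp add: divide_le_eq)
    finally show ?thesis .
  qed
  moreover have "c *\<^sub>R w \<in> matrix_kernel A \<inter> H_set K"
    using assms(1) cpos unfolding matrix_kernel_def H_set_def
    by (auto simp: matrix_vector_mult_scaleR mult_nonneg_nonneg mult_nonneg_nonpos)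
  moreover have "c *\<^sub>R w \<noteq> 0" using cpos assms(2) by simp
  ultimately show ?thesis using that by blast
qed

lemma P2_iff_P3:
  fixes A :: "real^'n^'m"
  shows "matrix_kernel A \<inter> H_set K = {0} \<longleftrightarrow>
         {x \<in> unit_cube. A *v x = A *v indic_vec K} = {indic_vec K}"
proof
  assume H: "matrix_kernel A \<inter> H_set K = {0}"
  have ec: "indic_vec K \<in> unit_cube" unfolding unit_cube_def indic_vec_def by auto
  have "x = indic_vec K" if "x \<in> unit_cube" "A *v x = A *v indic_vec K" for x
  proof -
    have "x - indic_vec K \<in> matrix_kernel A"
      using that(2) by (simp add: matrix_kernel_def matrix_vector_mult_diff_distrib)
    moreover have "x - indic_vec K \<in> H_set K"
      using that(1) unfolding unit_cube_def H_set_def indic_vec_def by auto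
    ultimately have "x - indic_vec K = 0" using H by blast
    thus ?thesis by simp
  qed
  thus "{x \<in> unit_cube. A *v x = A *v indic_vec K} = {indic_vec K}" using ec by auto
next
  assume H: "{x \<in> unit_cube. A *v x = A *v indic_vec K} = {indic_vec K}"
  show "matrix_kernel A \<inter> H_set K = {0}"
  proof (rule ccontr)
    assume "matrix_kernel A \<inter> H_set K \<noteq> {0}"
    moreover have "0 \<in> matrix_kernel A \<inter> H_set K"
      unfolding matrix_kernel_def H_set_def by auto
    ultimately obtain w where "w \<in> matrix_kernel A \<inter> H_set K" "w \<noteq> 0" by blast
    then obtain v where v: "v \<in> matrix_kernel A \<inter> H_set K" "v \<noteq> 0" "\<forall>i. \<bar>v$i\<bar> \<le> 1"
      by (rule scale_box)
    have vb: "\<And>i. -1 \<le> v$i \<and> v$i \<le> 1" using v(3) by (auto simp: abs_le_iff)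
    have "indic_vec K + v \<in> unit_cube"
      using v vb unfolding unit_cube_def H_set_def indic_vec_def
      by (auto; smt (verit) vb)
    moreover have "A *v (indic_vec K + v) = A *v indic_vec K"
      using v(1) by (simp add: matrix_kernel_def matrix_vector_right_distrib)
    ultimately have "indic_vec K + v = indic_vec K" using H by blast
    thus False using v(2) by simp
  qed
qed

lemma negH1:
  fixes A :: "real^'n^'m"
  assumes "matrix_kernel A \<inter> H_set K = {0}"
  shows "matrix_kernel A \<inter> H_set (-K) = {0}"
proof -
  have "w = 0" if "w \<in> matrix_kernel A \<inter> H_set (-K)" for w
  proof -
    have m: "A *v (-w) = -(A *v w)"
      using matrix_vector_mult_diff_distrib[of A 0 w] by simp
    have "-w \<in> matrix_kernel A \<inter> H_set K"
      using that m unfolding matrix_kernel_def H_set_def by auto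
    hence "-w = 0" using assms by blast
    thus ?thesis by simp
  qed
  moreover have "0 \<in> matrix_kernel A \<inter> H_set (-K)"
    unfolding matrix_kernel_def H_set_def by auto
  ultimately show ?thesis by blast
qed

lemma ones_minus: "ones - indic_vec K = indic_vec (-K)"
  unfolding ones_def indic_vec_def by (vector)

lemma P1_imp_P2:
  fixes A :: "real^'n^'m"
  assumes U1: "unique_l1_box_solution A (A *v indic_vec K) (indic_vec K)"
    and U2: "unique_l1_box_solution A (A *v indic_vec (-K)) (indic_vec (-K))"
  shows "matrix_kernel A \<inter> H_set K = {0}"
proof (rule ccontr)
  assume "matrix_kernel A \<inter> H_set K \<noteq> {0}"
  moreover have "0 \<in> matrix_kernel A \<inter> H_set K"
    unfolding matrix_kernel_def H_set_def by auto
  ultimately obtain w where "w \<in> matrix_kernel A \<inter> H_set K" "w \<noteq> 0" by blast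
  then obtain v where v: "v \<in> matrix_kernel A \<inter> H_set K" "v \<noteq> 0" "\<forall>i. \<bar>v$i\<bar> \<le> 1"
    by (rule scale_box)
  have vH: "\<And>i. i \<in> K \<Longrightarrow> v$i \<le> 0" "\<And>i. i \<notin> K \<Longrightarrow> v$i \<ge> 0"
    using v(1) unfolding H_set_def by auto
  have vb: "\<And>i. -1 \<le> v$i \<and> v$i \<le> 1" using v(3) by (auto simp: abs_le_iff)
  have c1: "indic_vec K + v \<in> unit_cube"
    using vH vb unfolding unit_cube_def indic_vec_def by (auto; smt (verit) vb)
  have a1: "A *v (indic_vec K + v) = A *v indic_vec K"
    using v(1) by (simp add: matrix_kernel_def matrix_vector_right_distrib)
  have c2: "indic_vec (-K) - v \<in> unit_cube"
    using vH vb unfolding unit_cube_def indic_vec_def by auto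
  have a2: "A *v (indic_vec (-K) - v) = A *v indic_vec (-K)"
    using v(1) by (simp add: matrix_kernel_def matrix_vector_mult_diff_distrib)
  have n1: "l1norm (indic_vec K + v) = l1norm (indic_vec K) + (\<Sum>i\<in>UNIV. v$i)"
  proof -
    have "\<bar>(indic_vec K + v)$i\<bar> = \<bar>indic_vec K $ i\<bar> + v$i" for i
      using vH[of i] vb[of i] unfolding indic_vec_def by auto
    thus ?thesis unfolding l1norm_def by (simp add: sum.distrib)
  qed
  have n2: "l1norm (indic_vec (-K) - v) = l1norm (indic_vec (-K)) - (\<Sum>i\<in>UNIV. v$i)"
  proof -
    have "\<bar>(indic_vec (-K) - v)$i\<bar> = \<bar>indic_vec (-K) $ i\<bar> - v$i" for i
      using vH[of i] vb[of i] unfolding indic_vec_def by auto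
    thus ?thesis unfolding l1norm_def by (simp add: sum_subtractf)
  qed
  have "l1norm (indic_vec K) < l1norm (indic_vec K + v)"
    using U1 c1 a1 v(2) unfolding unique_l1_box_solution_def by auto
  moreover have "l1norm (indic_vec (-K)) < l1norm (indic_vec (-K) - v)"
    using U2 c2 a2 v(2) unfolding unique_l1_box_solution_def by auto
  ultimately show False using n1 n2 by linarith
qed

lemma P3_imp_U:
  assumes "{x \<in> unit_cube. A *v x = A *v z} = {z}"
  shows "unique_l1_box_solution A (A *v z) z"
  using assms unfolding unique_l1_box_solution_def by blast

theorem proposition2p3:
  fixes A :: "real^'n^'m" and K :: "'n set"
  defines "P1 \<equiv> unique_l1_box_solution A (A *v indic_vec K) (indic_vec K) \<and>
                 unique_l1_box_solution A (A *v (ones - indic_vec K)) (ones - indic_vec K)"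
      and "P2 \<equiv> matrix_kernel A \<inter> H_set K = {0}"
      and "P3 \<equiv> {x \<in> unit_cube. A *v x = A *v indic_vec K} = {indic_vec K}"
      and "P4 \<equiv> {x \<in> unit_cube. A *v x = A *v indic_vec (- K)} = {indic_vec (- K)}"
  shows "(P1 \<longleftrightarrow> P2) \<and> (P2 \<longleftrightarrow> P3) \<and> (P3 \<longleftrightarrow> P4)"
proof -
  have 23: "P2 \<longleftrightarrow> P3" unfolding P2_def P3_def by (rule P2_iff_P3)
  have 24: "P2 \<longleftrightarrow> P4" unfolding P2_def P4_def
    using P2_iff_P3[of A "-K"] negH1[of A K] negH1[of A "-K"] by auto
  have "P1 \<longleftrightarrow> P2"
  proof
    assume "P1" thus P2 unfolding P1_def P2_def ones_minus using P1_imp_P2 by blast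
  next
    assume "P2" hence "P3" "P4" using 23 24 by auto
    thus P1 unfolding P1_def P3_def P4_def ones_minus by (blast intro: P3_imp_U)
  qed
  thus ?thesis using 23 24 by blast
qed

end
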